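(* Fix constants $0<A_m<A_M$, $B_i>0$ for $2\le i\le 5$, $C>0$, and an integer $n\ge 2$. Let $T_0<b$ and let $x:[T_0,b]\to\mathbb{R}^2$ be a $C^5$ unit-speed curve with $\sup_t\|x^{(i)}(t)\|\le B_i$ for $2\le i\le 5$. Let $\epsilon>0$ be sufficiently small, let $T=(T_0<T_1<\dots<T_n\le b)$ satisfy $A_m\epsilon<L_j:=T_j-T_{j-1}<A_M\epsilon$ for $1\le j\le n$, let $Y_j=x(T_j)$, and suppose $T$ is admissible. Write $q_j:=(Y_j-Y_{j-1})/L_j=r_j(\cos\omega_j,\sin\omega_j)$ with $r_j>0$, $\omega_j\in\mathbb{R}$. Then there exist $0<\delta_0<\delta_1<1$, depending only on $A_m,A_M,B_2,B_3,B_4,C$ and $\epsilon$, such that $r_j\in[\delta_0,\delta_1]$ for all $1\le j\le n$.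
   Context: For $\epsilon$ sufficiently small $q_j\ne 0$, and one defines $k_j:=\dfrac{\sqrt{12(1-\|q_j\|^2)}}{L_j\|q_j\|}$ for $1\le j\le n$ (Euclidean norm). The sequence $T$ is called admissible when $k_j\ge C$ for all $1\le j\le n$. *)

theory Defs
  imports "HOL-Analysis.Analysis"
begin

definition C5_unit_curve ::
  "real \<Rightarrow> real \<Rightarrow> (real \<Rightarrow> real^2) \<Rightarrow> real \<Rightarrow> real \<Rightarrow> real \<Rightarrow> real \<Rightarrow> bool" where
  "C5_unit_curve T0 b x B2 B3 B4 B5 \<longleftrightarrow>
     (\<exists>D :: nat \<Rightarrow> real \<Rightarrow> real^2.
        D 0 = x \<and>
        (\<forall>i<5. \<forall>t\<in>{T0..b}. (D i has_vector_derivative D (Suc i) t) (at t within {T0..b})) \<and>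
        continuous_on {T0..b} (D 5) \<and>
        (\<forall>t\<in>{T0..b}. norm (D 1 t) = 1) \<and>
        (\<forall>t\<in>{T0..b}. norm (D 2 t) \<le> B2 \<and> norm (D 3 t) \<le> B3 \<and>
                        norm (D 4 t) \<le> B4 \<and> norm (D 5 t) \<le> B5))"

definition seglen :: "(nat \<Rightarrow> real) \<Rightarrow> nat \<Rightarrow> real" where
  "seglen T j = T j - T (j - 1)"

definition chordq :: "(real \<Rightarrow> real^2) \<Rightarrow> (nat \<Rightarrow> real) \<Rightarrow> nat \<Rightarrow> real^2" where
  "chordq x T j = (1 / seglen T j) *\<^sub>R (x (T j) - x (T (j - 1)))"

definition kappa :: "(real \<Rightarrow> real^2) \<Rightarrow> (nat \<Rightarrow> real) \<Rightarrow> nat \<Rightarrow> real" where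
  "kappa x T j = sqrt (12 * (1 - (norm (chordq x T j))\<^sup>2)) / (seglen T j * norm (chordq x T j))"

definition admissible :: "real \<Rightarrow> (real \<Rightarrow> real^2) \<Rightarrow> (nat \<Rightarrow> real) \<Rightarrow> nat \<Rightarrow> bool" where
  "admissible C x T n \<longleftrightarrow> (\<forall>j\<in>{1..n}. kappa x T j \<ge> C)"

end

theory Submission
  imports Defs
begin

lemma chord_lower:
  assumes cu: "C5_unit_curve T0 b x B2 B3 B4 B5"
    and st: "T0 \<le> s" "s < t" "t \<le> b"
  shows "norm (x t - x s) \<ge> (t - s) - 3 * B2 * (t - s)^2"
proof -
  from cu obtain D :: "nat \<Rightarrow> real \<Rightarrow> real^2" where
    D0: "D 0 = x" and
    Dd: "\<forall>i<5. \<forall>t\<in>{T0..b}. (D i has_vector_derivative D (Suc i) t) (at t within {T0..b})" and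
    D1: "\<forall>t\<in>{T0..b}. norm (D 1 t) = 1" and
    Db: "\<forall>t\<in>{T0..b}. norm (D 2 t) \<le> B2 \<and> norm (D 3 t) \<le> B3 \<and>
                        norm (D 4 t) \<le> B4 \<and> norm (D 5 t) \<le> B5"
    unfolding C5_unit_curve_def by blast
  have sub: "{s..t} \<subseteq> {T0..b}" using st by auto
  have der: "\<And>i y. i < 5 \<Longrightarrow> y \<in> {s..t} \<Longrightarrow> (D i has_vector_derivative D (Suc i) y) (at y within {s..t})"
    using Dd sub by (meson has_vector_derivative_within_subset subsetD)
  have B2: "\<And>y. y \<in> {s..t} \<Longrightarrow> norm (D 2 y) \<le> B2" using Db sub by auto
  have cs: "\<And>y. y \<in> {s..t} \<Longrightarrow> closed_segment s y \<subseteq> {s..t}"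
    by (auto simp: closed_segment_eq_real_ivl)
  have d1: "norm (D 1 y - D 1 s) \<le> 3 * B2 * (t - s)" if y: "y \<in> {s..t}" for y
  proof -
    have "norm (D 1 y - D 1 s - (y - s) *\<^sub>R D (Suc 1) s) \<le> norm (y - s) * (2 * B2)"
    proof (rule vector_differentiable_bound_linearization[where S="{s..t}"])
      show "\<And>z. z \<in> {s..t} \<Longrightarrow> (D 1 has_vector_derivative D (Suc 1) z) (at z within {s..t})"
        using der by simp
      show "closed_segment s y \<subseteq> {s..t}" using cs y .
      show "\<And>z. z \<in> {s..t} \<Longrightarrow> norm (D (Suc 1) z - D (Suc 1) s) \<le> 2 * B2"
      proof -
        fix z assume z: "z \<in> {s..t}"
        have "norm (D (Suc 1) z - D (Suc 1) s) \<le> norm (D 2 z) + norm (D 2 s)"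
          using norm_triangle_ineq4[of "D 2 z" "D 2 s"] by (simp add: numeral_2_eq_2)
        also have "\<dots> \<le> 2 * B2" using B2[OF z] B2[of s] st by auto
        finally show "norm (D (Suc 1) z - D (Suc 1) s) \<le> 2 * B2" .
      qed
      show "s \<in> {s..t}" using st by auto
    qed
    moreover have "norm ((y - s) *\<^sub>R D 2 s) \<le> (t - s) * B2"
      using y B2[of s] st by (auto intro!: mult_mono)
    moreover have "norm (y - s) \<le> t - s" using y by auto
    ultimately have "norm (D 1 y - D 1 s) \<le> (t - s) * (2 * B2) + (t - s) * B2"
      using norm_triangle_ineq[of "D 1 y - D 1 s - (y - s) *\<^sub>R D 2 s" "(y - s) *\<^sub>R D 2 s"]
    proof -
      assume a: "norm (D 1 y - D 1 s - (y - s) *\<^sub>R D (Suc 1) s) \<le> norm (y - s) * (2 * B2)"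
        and b: "norm ((y - s) *\<^sub>R D 2 s) \<le> (t - s) * B2" and c: "norm (y - s) \<le> t - s"
        and d: "norm (D 1 y - D 1 s - (y - s) *\<^sub>R D 2 s + (y - s) *\<^sub>R D 2 s)
           \<le> norm (D 1 y - D 1 s - (y - s) *\<^sub>R D 2 s) + norm ((y - s) *\<^sub>R D 2 s)"
      have a': "norm (D 1 y - D 1 s - (y - s) *\<^sub>R D 2 s) \<le> norm (y - s) * (2 * B2)"
        using a by (simp add: numeral_2_eq_2)
      have B0: "0 \<le> B2" using B2[of s] st by (meson atLeastAtMost_iff less_eq_real_def norm_ge_zero order_trans)
      have "norm (y - s) * (2 * B2) \<le> (t - s) * (2 * B2)" using c B0 by (intro mult_right_mono) auto
      then show "norm (D 1 y - D 1 s) \<le> (t - s) * (2 * B2) + (t - s) * B2" using a' b d[unfolded diff_add_cancel] by linarith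
    qed
    then show ?thesis by (simp add: algebra_simps)
  qed
  have "norm (D 0 t - D 0 s - (t - s) *\<^sub>R D (Suc 0) s) \<le> norm (t - s) * (3 * B2 * (t - s))"
  proof (rule vector_differentiable_bound_linearization[where S="{s..t}"])
    show "\<And>z. z \<in> {s..t} \<Longrightarrow> (D 0 has_vector_derivative D (Suc 0) z) (at z within {s..t})"
      using der by simp
    show "closed_segment s t \<subseteq> {s..t}" using cs st by auto
    show "\<And>z. z \<in> {s..t} \<Longrightarrow> norm (D (Suc 0) z - D (Suc 0) s) \<le> 3 * B2 * (t - s)"
      using d1 by simp
    show "s \<in> {s..t}" using st by auto
  qed
  then have e: "norm (x t - x s - (t - s) *\<^sub>R D 1 s) \<le> (t - s) * (3 * B2 * (t - s))"
    using D0 st by simp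
  have f: "norm ((t - s) *\<^sub>R D 1 s) = t - s" using D1 st by auto
  have g: "norm ((t - s) *\<^sub>R D 1 s) \<le> norm (x t - x s) + norm (x t - x s - (t - s) *\<^sub>R D 1 s)"
    using norm_triangle_ineq4[of "x t - x s" "x t - x s - (t - s) *\<^sub>R D 1 s"] by simp
  have "t - s \<le> norm (x t - x s) + (t - s) * (3 * B2 * (t - s))"
    using e f g by linarith
  then show ?thesis by (simp add: power2_eq_square algebra_simps)
qed

lemma upper_r:
  fixes C L a r :: real
  assumes "0 < C" "a < L" "0 < a" "C \<le> sqrt (12 * (1 - r^2)) / (L * r)" "0 \<le> r"
  shows "r \<le> sqrt (12 / (12 + (C * a)^2))"
proof -
  have r0: "r \<noteq> 0" using assms by auto
  then have Lr: "L * r > 0" using assms by auto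
  have h: "C * (L * r) \<le> sqrt (12 * (1 - r^2))" using assms(4) Lr by (simp add: pos_le_divide_eq)
  have "0 < C * (L * r)" using assms Lr by auto
  then have sp: "0 < sqrt (12 * (1 - r^2))" using h by linarith
  then have pos: "0 < 12 * (1 - r^2)" by simp
  have "(C * (L * r))^2 \<le> (sqrt (12 * (1 - r^2)))^2"
    using h \<open>0 < C * (L * r)\<close> by (intro power_mono) auto
  then have h2: "(C * (L * r))^2 \<le> 12 * (1 - r^2)" using pos by simp
  have "(C * a * r)^2 \<le> (C * (L * r))^2"
    using assms r0 by (intro power_mono) (auto intro!: mult_right_mono mult_left_mono)
  with h2 have "r^2 * (12 + (C * a)^2) \<le> 12" by (simp add: power_mult_distrib algebra_simps)
  then have "r^2 \<le> 12 / (12 + (C * a)^2)" by (simp add: pos_le_divide_eq add_pos_nonneg)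
  then have "sqrt (r^2) \<le> sqrt (12 / (12 + (C * a)^2))" by (rule real_sqrt_le_mono)
  then show ?thesis using assms by simp
qed

lemma mono_T:
  fixes T :: "nat \<Rightarrow> real"
  assumes "\<forall>j\<in>{1..n}. T (j - 1) < T j" "i \<le> k" "k \<le> n"
  shows "T i \<le> T k"
  using assms(2,3)
proof (induction k)
  case 0 then show ?case by simp
next
  case (Suc k)
  show ?case
  proof (cases "i = Suc k")
    case True then show ?thesis by simp
  next
    case False
    then have "T i \<le> T k" using Suc by auto
    moreover have "T k < T (Suc k)" using assms(1) Suc.prems by (metis atLeastAtMost_iff diff_Suc_1 le_add1 plus_1_eq_Suc)
    ultimately show ?thesis by simp
  qed
qed

theorem lemma1:
  fixes Am AM B2 B3 B4 C :: real
  assumes "0 < Am" "Am < AM" "0 < B2" "0 < B3" "0 < B4" "0 < C"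
  shows "\<exists>\<delta>0 \<delta>1 :: real \<Rightarrow> real. \<forall>(B5::real) (n::nat). 0 < B5 \<and> 2 \<le> n \<longrightarrow>
    (\<exists>\<epsilon>0>0. \<forall>\<epsilon>. 0 < \<epsilon> \<and> \<epsilon> < \<epsilon>0 \<longrightarrow>
       0 < \<delta>0 \<epsilon> \<and> \<delta>0 \<epsilon> < \<delta>1 \<epsilon> \<and> \<delta>1 \<epsilon> < 1 \<and>
       (\<forall>T0 b (x :: real \<Rightarrow> real^2) (T :: nat \<Rightarrow> real).
          T0 < b \<and> C5_unit_curve T0 b x B2 B3 B4 B5 \<and>
          T 0 = T0 \<and> T n \<le> b \<and>
          (\<forall>j\<in>{1..n}. Am * \<epsilon> < seglen T j \<and> seglen T j < AM * \<epsilon>) \<and>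
          admissible C x T n
          \<longrightarrow> (\<forall>j\<in>{1..n}. \<delta>0 \<epsilon> \<le> norm (chordq x T j) \<and> norm (chordq x T j) \<le> \<delta>1 \<epsilon>)))"
proof (rule exI, rule exI, intro allI impI)
  fix B5 :: real and n :: nat
  assume "0 < B5 \<and> 2 \<le> n"
  define e0 where "e0 = min (1 / (6 * B2 * AM)) (1 / (C * Am))"
  have AM0: "0 < AM" using assms by linarith
  have e0p: "0 < e0" unfolding e0_def using assms AM0 by auto
  show "\<exists>\<epsilon>0>0. \<forall>\<epsilon>. 0 < \<epsilon> \<and> \<epsilon> < \<epsilon>0 \<longrightarrow>
       0 < (\<lambda>_. 1/2::real) \<epsilon> \<and> (\<lambda>_. 1/2::real) \<epsilon> < (\<lambda>\<epsilon>. sqrt (12 / (12 + (C * (Am * \<epsilon>))^2))) \<epsilon> \<and>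
       (\<lambda>\<epsilon>. sqrt (12 / (12 + (C * (Am * \<epsilon>))^2))) \<epsilon> < 1 \<and>
       (\<forall>T0 b (x :: real \<Rightarrow> real^2) (T :: nat \<Rightarrow> real).
          T0 < b \<and> C5_unit_curve T0 b x B2 B3 B4 B5 \<and>
          T 0 = T0 \<and> T n \<le> b \<and>
          (\<forall>j\<in>{1..n}. Am * \<epsilon> < seglen T j \<and> seglen T j < AM * \<epsilon>) \<and>
          admissible C x T n
          \<longrightarrow> (\<forall>j\<in>{1..n}. (\<lambda>_. 1/2::real) \<epsilon> \<le> norm (chordq x T j) \<and>
               norm (chordq x T j) \<le> (\<lambda>\<epsilon>. sqrt (12 / (12 + (C * (Am * \<epsilon>))^2))) \<epsilon>))"
  proof (intro exI[of _ e0] conjI allI impI e0p)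
    fix \<epsilon> :: real
    assume ep: "0 < \<epsilon> \<and> \<epsilon> < e0"
    then have ep0: "0 < \<epsilon>" and ep1: "\<epsilon> < 1 / (6 * B2 * AM)" and ep2: "\<epsilon> < 1 / (C * Am)"
      unfolding e0_def by auto
    define K where "K = (C * (Am * \<epsilon>))^2"
    have K0: "0 < K" unfolding K_def using assms ep0 by auto
    have "C * Am * \<epsilon> < 1" using ep2 assms by (simp add: pos_less_divide_eq mult.commute mult.left_commute)
    then have "C * (Am * \<epsilon>) < 1" by (simp add: mult.assoc)
    then have K1: "K < 1" unfolding K_def using assms ep0
      by (metis less_eq_real_def mult_pos_pos one_power2 power_strict_mono zero_less_numeral)
    show "0 < (1/2::real)" by simp
  next
    fix \<epsilon> :: real
    assume ep: "0 < \<epsilon> \<and> \<epsilon> < e0"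
    then have ep0: "0 < \<epsilon>" and ep1: "\<epsilon> < 1 / (6 * B2 * AM)" and ep2: "\<epsilon> < 1 / (C * Am)"
      unfolding e0_def by auto
    define K where "K = (C * (Am * \<epsilon>))^2"
    have K0: "0 < K" unfolding K_def using assms ep0 by auto
    have "C * Am * \<epsilon> < 1" using ep2 assms by (simp add: pos_less_divide_eq mult.commute mult.left_commute)
    then have "C * (Am * \<epsilon>) < 1" by (simp add: mult.assoc)
    then have K1: "K < 1" unfolding K_def using assms ep0
      by (metis less_eq_real_def mult_pos_pos one_power2 power_strict_mono zero_less_numeral)
    have "sqrt (1/4) < sqrt (12 / (12 + K))"
      using K0 K1 by (subst real_sqrt_less_iff) (simp add: field_simps)
    moreover have "sqrt (1/4) = (1/2::real)"
      by (metis real_sqrt_divide real_sqrt_four real_sqrt_one)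
    ultimately show "(\<lambda>_. 1/2::real) \<epsilon> < (\<lambda>\<epsilon>. sqrt (12 / (12 + (C * (Am * \<epsilon>))^2))) \<epsilon>"
      unfolding K_def by simp
  next
    fix \<epsilon> :: real
    assume ep: "0 < \<epsilon> \<and> \<epsilon> < e0"
    then have ep0: "0 < \<epsilon>" and ep1: "\<epsilon> < 1 / (6 * B2 * AM)" and ep2: "\<epsilon> < 1 / (C * Am)"
      unfolding e0_def by auto
    define K where "K = (C * (Am * \<epsilon>))^2"
    have K0: "0 < K" unfolding K_def using assms ep0 by auto
    have "C * Am * \<epsilon> < 1" using ep2 assms by (simp add: pos_less_divide_eq mult.commute mult.left_commute)
    then have "C * (Am * \<epsilon>) < 1" by (simp add: mult.assoc)
    then have K1: "K < 1" unfolding K_def using assms ep0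
      by (metis less_eq_real_def mult_pos_pos one_power2 power_strict_mono zero_less_numeral)
    have "12 / (12 + K) < 1" using K0 by simp
    then show "(\<lambda>\<epsilon>. sqrt (12 / (12 + (C * (Am * \<epsilon>))^2))) \<epsilon> < 1"
      unfolding K_def by simp
  next
    fix \<epsilon> :: real and T0 b and x :: "real \<Rightarrow> real^2" and T :: "nat \<Rightarrow> real"
    assume ep: "0 < \<epsilon> \<and> \<epsilon> < e0"
    assume H: "T0 < b \<and> C5_unit_curve T0 b x B2 B3 B4 B5 \<and>
          T 0 = T0 \<and> T n \<le> b \<and>
          (\<forall>j\<in>{1..n}. Am * \<epsilon> < seglen T j \<and> seglen T j < AM * \<epsilon>) \<and>
          admissible C x T n"
    from ep have ep0: "0 < \<epsilon>" and ep1: "\<epsilon> < 1 / (6 * B2 * AM)"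
      unfolding e0_def by auto
    from H have cu: "C5_unit_curve T0 b x B2 B3 B4 B5" and T00: "T 0 = T0" and Tn: "T n \<le> b"
      and seg: "\<forall>j\<in>{1..n}. Am * \<epsilon> < seglen T j \<and> seglen T j < AM * \<epsilon>"
      and adm: "admissible C x T n" by auto
    have inc: "\<forall>j\<in>{1..n}. T (j - 1) < T j"
    proof
      fix j assume "j \<in> {1..n}"
      then have "Am * \<epsilon> < T j - T (j - 1)" using seg unfolding seglen_def by auto
      moreover have "0 < Am * \<epsilon>" using assms ep0 by simp
      ultimately show "T (j - 1) < T j" by linarith
    qed
    show "\<forall>j\<in>{1..n}. (\<lambda>_. 1/2::real) \<epsilon> \<le> norm (chordq x T j) \<and>
               norm (chordq x T j) \<le> (\<lambda>\<epsilon>. sqrt (12 / (12 + (C * (Am * \<epsilon>))^2))) \<epsilon>"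
    proof
      fix j assume j: "j \<in> {1..n}"
      define s where "s = T (j - 1)"
      define t where "t = T j"
      define L where "L = t - s"
      have Lb: "Am * \<epsilon> < L" "L < AM * \<epsilon>" using seg j unfolding L_def s_def t_def seglen_def by auto
      have L0: "0 < L" using Lb assms ep0 by (smt (verit) mult_pos_pos)
      have st: "s < t" using L0 L_def by simp
      have sT0: "T0 \<le> s" unfolding s_def T00[symmetric] using j by (intro mono_T[OF inc]) auto
      have tb: "t \<le> b" unfolding t_def using mono_T[OF inc, of j n] j Tn by auto
      have cq: "chordq x T j = (1 / L) *\<^sub>R (x t - x s)"
        unfolding chordq_def seglen_def L_def s_def t_def by simp
      have nr: "norm (chordq x T j) = norm (x t - x s) / L" using cq L0 by simp
      have low: "norm (x t - x s) \<ge> L - 3 * B2 * L^2"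
        using chord_lower[OF cu sT0 st tb] unfolding L_def .
      have "3 * B2 * L \<le> 3 * B2 * (AM * \<epsilon>)" using Lb assms by simp
      moreover have "B2 * (AM * \<epsilon>) < 1/6" using ep1 assms AM0
        by (simp add: pos_less_divide_eq mult.commute mult.left_commute)
      ultimately have "3 * B2 * L \<le> 1/2" by linarith
      then have "(3 * B2 * L) * L \<le> (1/2) * L" using L0 by (intro mult_right_mono) auto
      then have "L - 3 * B2 * L^2 \<ge> L / 2" by (simp add: power2_eq_square algebra_simps)
      then have "norm (x t - x s) / L \<ge> 1/2" using low L0 by (simp add: pos_le_divide_eq)
      then have lo: "1/2 \<le> norm (chordq x T j)" using nr by simp
      have kap: "C \<le> kappa x T j" using adm j unfolding admissible_def by auto
      have "kappa x T j = sqrt (12 * (1 - (norm (chordq x T j))^2)) / (L * norm (chordq x T j))"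
        unfolding kappa_def seglen_def L_def s_def t_def by simp
      then have "norm (chordq x T j) \<le> sqrt (12 / (12 + (C * (Am * \<epsilon>))^2))"
        using kap assms ep0 Lb by (intro upper_r[of C "Am * \<epsilon>" L]) auto
      with lo show "(\<lambda>_. 1/2::real) \<epsilon> \<le> norm (chordq x T j) \<and>
               norm (chordq x T j) \<le> (\<lambda>\<epsilon>. sqrt (12 / (12 + (C * (Am * \<epsilon>))^2))) \<epsilon>" by simp
    qed
  qed
qed

end
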